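(* Let $\mathbb{T}$ be a time scale and $\alpha\in(0,1]$. Suppose $f:\mathbb{T}\to\mathbb{R}$ is strictly increasing, $\tilde{\mathbb{T}}:=\mathrm{Ran}(f)$ is a time scale, and $f$ is continuously nabla fractional differentiable of order $1$ at each point of $\mathbb{T}^k$. If $f^{-1}:\tilde{\mathbb{T}}\to\mathbb{T}$ exists, then for $t\in\tilde{\mathbb{T}}^k$ with $\big(\nabla^{(1)}f\big)(f^{-1}(t))\neq 0$, $$\nabla^{(\alpha)}f^{-1}(t)=\begin{cases}\dfrac{(\nu(t))^{1-\alpha}}{\big(\nabla^{(1)}f\big)(f^{-1}(t))} & \text{if } \alpha\neq 1,\\[2ex] \dfrac{1}{\big(\nabla^{(1)}f\big)(f^{-1}(t))} & \text{if } \alpha=1,\end{cases}$$ where $\nu$ and $\nabla^{(\alpha)}f^{-1}$ are computed on the time scale $\tilde{\mathbb{T}}$ and $\nabla^{(1)}f$ on $\mathbb{T}$.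
   Context: A time scale is a nonempty closed subset of $\mathbb{R}$ with the relative topology. On a time scale $\mathbb{S}$, for $t\in\mathbb{S}$: $\rho(t)=\sup\{s\in\mathbb{S}:s<t\}$, $\sigma(t)=\inf\{s\in\mathbb{S}:s>t\}$, $\nu(t)=t-\rho(t)$. If $\mathbb{S}$ has a minimum $m$ with $\sigma(m)>m$ then $\mathbb{S}^k=\mathbb{S}\setminus\{m\}$, else $\mathbb{S}^k=\mathbb{S}$. $U_\delta(t)=(t-\delta,t+\delta)\cap\mathbb{S}$, $U^-_\delta(t)=(t-\delta,t)\cap\mathbb{S}$. Let $Q=\{1/q: q \text{ an odd positive integer}\}$; for $\alpha\in Q$, $x^\alpha$ is the real $q$-th root. Definition: $h:\mathbb{S}\to\mathbb{R}$ is nabla fractional differentiable of order $\alpha$ at $t\in\mathbb{S}^k$ if there is $L\in\mathbb{R}$ such that for every $\varepsilon>0$ there is $\delta>0$ with $|[h(\rho(t))-h(s)]-L[\rho(t)-s]^\alpha|\le\varepsilon|\rho(t)-s|^\alpha$ for all $s\in U_\delta(t)$ if $\alpha\in Q$, resp. all $s\in U^-_\delta(t)$ if $\alpha\notin Q$; then $\nabla^{(\alpha)}h(t):=L$. "Continuously nabla fractional differentiable of order $1$ at each point of $\mathbb{T}^k$" means nabla fractional differentiable of order $1$ at every point of $\mathbb{T}^k$ with $\nabla^{(1)}f$ continuous there. *)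

theory Defs
  imports "HOL-Analysis.Analysis"
begin

definition time_scale :: "real set \<Rightarrow> bool" where
  "time_scale S \<longleftrightarrow> S \<noteq> {} \<and> closed S"

definition rho :: "real set \<Rightarrow> real \<Rightarrow> real" where
  "rho S t = (if {s\<in>S. s < t} = {} then t else Sup {s\<in>S. s < t})"

definition sigma :: "real set \<Rightarrow> real \<Rightarrow> real" where
  "sigma S t = (if {s\<in>S. s > t} = {} then t else Inf {s\<in>S. s > t})"

definition nu :: "real set \<Rightarrow> real \<Rightarrow> real" where
  "nu S t = t - rho S t"

definition Tk :: "real set \<Rightarrow> real set" where
  "Tk S = (if \<exists>m\<in>S. (\<forall>s\<in>S. m \<le> s) \<and> sigma S m > m
           then S - {m. m \<in> S \<and> (\<forall>s\<in>S. m \<le> s)} else S)"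

definition U_nbhd :: "real set \<Rightarrow> real \<Rightarrow> real \<Rightarrow> real set" where
  "U_nbhd S \<delta> t = {t - \<delta> <..< t + \<delta>} \<inter> S"

definition U_left :: "real set \<Rightarrow> real \<Rightarrow> real \<Rightarrow> real set" where
  "U_left S \<delta> t = {t - \<delta> <..< t} \<inter> S"

definition Qset :: "real set" where
  "Qset = {1 / real q | q. odd q \<and> q > 0}"

text \<open>x^alpha: real q-th root for alpha = 1/q in Q, otherwise powr
  (only applied to nonnegative arguments in that case).\<close>
definition frac_pow :: "real \<Rightarrow> real \<Rightarrow> real" where
  "frac_pow \<alpha> x = (if \<alpha> \<in> Qset then root (THE q. odd q \<and> q > 0 \<and> \<alpha> = 1 / real q) x
                    else x powr \<alpha>)"

definition has_nabla_frac_deriv ::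
  "real set \<Rightarrow> real \<Rightarrow> (real \<Rightarrow> real) \<Rightarrow> real \<Rightarrow> real \<Rightarrow> bool" where
  "has_nabla_frac_deriv S \<alpha> h t L \<longleftrightarrow> t \<in> Tk S \<and>
     (\<forall>\<epsilon>>0. \<exists>\<delta>>0. \<forall>s \<in> (if \<alpha> \<in> Qset then U_nbhd S \<delta> t else U_left S \<delta> t).
        \<bar>(h (rho S t) - h s) - L * frac_pow \<alpha> (rho S t - s)\<bar>
          \<le> \<epsilon> * (\<bar>rho S t - s\<bar> powr \<alpha>))"

end

theory Submission
  imports Defs
begin

lemma smo_le:
  fixes f :: "real \<Rightarrow> real"
  assumes "strict_mono_on T f" "a \<in> T" "b \<in> T"
  shows "f a \<le> f b \<longleftrightarrow> a \<le> b"
  using assms unfolding strict_mono_on_def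
  by (cases a b rule: linorder_cases) force+

lemma smo_less:
  fixes f :: "real \<Rightarrow> real"
  assumes "strict_mono_on T f" "a \<in> T" "b \<in> T"
  shows "f a < f b \<longleftrightarrow> a < b"
  using assms unfolding strict_mono_on_def
  by (cases a b rule: linorder_cases) force+

lemma rho_in:
  assumes "time_scale T" "x \<in> T" shows "rho T x \<in> T"
proof (cases "{s\<in>T. s < x} = {}")
  case True then show ?thesis using assms by (simp add: rho_def)
next
  case False
  have "bdd_above {s\<in>T. s < x}" by (auto intro: bdd_aboveI[of _ x])
  then have "Sup {s\<in>T. s < x} \<in> closure {s\<in>T. s < x}" by (rule closure_contains_Sup[OF False])
  also have "\<dots> \<subseteq> T" using assms unfolding time_scale_def
    by (simp add: closure_minimal)
  finally show ?thesis using False assms by (simp add: rho_def)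
qed

lemma sigma_in:
  assumes "time_scale T" "x \<in> T" shows "sigma T x \<in> T"
proof (cases "{s\<in>T. s > x} = {}")
  case True then show ?thesis using assms by (simp add: sigma_def)
next
  case False
  have "bdd_below {s\<in>T. s > x}" by (auto intro: bdd_belowI[of _ x])
  then have "Inf {s\<in>T. s > x} \<in> closure {s\<in>T. s > x}" by (rule closure_contains_Inf[OF False])
  also have "\<dots> \<subseteq> T" using assms unfolding time_scale_def
    by (simp add: closure_minimal)
  finally show ?thesis using False assms by (simp add: sigma_def)
qed

lemma rho_img:
  assumes T: "time_scale T" and S: "time_scale (f ` T)" and m: "strict_mono_on T f" and x: "x \<in> T"
  shows "rho (f ` T) (f x) = f (rho T x)"
proof -
  define A where "A = {y\<in>T. y < x}"
  define B where "B = {s\<in>f ` T. s < f x}"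
  have BA: "B = f ` A" using m x unfolding A_def B_def by (auto simp: smo_less)
  show ?thesis
  proof (cases "A = {}")
    case True
    then have "B = {}" using BA by simp
    then show ?thesis using True unfolding rho_def A_def B_def by simp
  next
    case False
    then have Bne: "B \<noteq> {}" using BA by simp
    have bA: "bdd_above A" unfolding A_def by (auto intro: bdd_aboveI[of _ x])
    have bB: "bdd_above B" unfolding B_def by (auto intro: bdd_aboveI[of _ "f x"])
    have rA: "rho T x = Sup A" using False unfolding rho_def A_def by (intro if_not_P)
    then have pT: "Sup A \<in> T" using rho_in[OF T x] by simp
    have rB: "rho (f ` T) (f x) = Sup B" using Bne unfolding rho_def B_def by (intro if_not_P)
    then have qS: "Sup B \<in> f ` T" using rho_in[OF S, of "f x"] x by simp
    then obtain z where z: "z \<in> T" "Sup B = f z" by auto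
    have 1: "Sup B \<le> f (Sup A)"
    proof (rule cSup_least[OF Bne])
      fix s assume "s \<in> B"
      then obtain y where y: "y \<in> A" "s = f y" using BA by auto
      have "y \<le> Sup A" using cSup_upper[OF y(1) bA] .
      then show "s \<le> f (Sup A)" using y pT m unfolding A_def by (auto simp: smo_le)
    qed
    have "Sup A \<le> z"
    proof (rule cSup_least[OF False])
      fix y assume y: "y \<in> A"
      then have "f y \<in> B" using BA by auto
      then have "f y \<le> f z" using cSup_upper[OF _ bB] z by auto
      then show "y \<le> z" using y z m unfolding A_def by (auto simp: smo_le)
    qed
    then have "f (Sup A) \<le> Sup B" using z pT m by (auto simp: smo_le)
    with 1 have "Sup B = f (Sup A)" by simp
    then show ?thesis using rA rB by simp
  qed
qed

lemma sigma_img: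
  assumes T: "time_scale T" and S: "time_scale (f ` T)" and m: "strict_mono_on T f" and x: "x \<in> T"
  shows "sigma (f ` T) (f x) = f (sigma T x)"
proof -
  define A where "A = {y\<in>T. y > x}"
  define B where "B = {s\<in>f ` T. s > f x}"
  have BA: "B = f ` A" using m x unfolding A_def B_def by (auto simp: smo_less)
  show ?thesis
  proof (cases "A = {}")
    case True
    then have "B = {}" using BA by simp
    then show ?thesis using True unfolding sigma_def A_def B_def by simp
  next
    case False
    then have Bne: "B \<noteq> {}" using BA by simp
    have bA: "bdd_below A" unfolding A_def by (auto intro: bdd_belowI[of _ x])
    have bB: "bdd_below B" unfolding B_def by (auto intro: bdd_belowI[of _ "f x"])
    have rA: "sigma T x = Inf A" using False unfolding sigma_def A_def by (intro if_not_P)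
    then have pT: "Inf A \<in> T" using sigma_in[OF T x] by simp
    have rB: "sigma (f ` T) (f x) = Inf B" using Bne unfolding sigma_def B_def by (intro if_not_P)
    then have qS: "Inf B \<in> f ` T" using sigma_in[OF S, of "f x"] x by simp
    then obtain z where z: "z \<in> T" "Inf B = f z" by auto
    have 1: "f (Inf A) \<le> Inf B"
    proof (rule cInf_greatest[OF Bne])
      fix s assume "s \<in> B"
      then obtain y where y: "y \<in> A" "s = f y" using BA by auto
      have "Inf A \<le> y" using cInf_lower[OF y(1) bA] .
      then show "f (Inf A) \<le> s" using y pT m unfolding A_def by (auto simp: smo_le)
    qed
    have "z \<le> Inf A"
    proof (rule cInf_greatest[OF False])
      fix y assume y: "y \<in> A"
      then have "f y \<in> B" using BA by auto
      then have "f z \<le> f y" using cInf_lower[OF _ bB] z by auto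
      then show "z \<le> y" using y z m unfolding A_def by (auto simp: smo_le)
    qed
    then have "Inf B \<le> f (Inf A)" using z pT m by (auto simp: smo_le)
    with 1 have "Inf B = f (Inf A)" by simp
    then show ?thesis using rA rB by simp
  qed
qed

lemma Tk_img:
  assumes T: "time_scale T" and S: "time_scale (f ` T)" and m: "strict_mono_on T f" and x: "x \<in> T"
    and fx: "f x \<in> Tk (f ` T)"
  shows "x \<in> Tk T"
proof (rule ccontr)
  assume nx: "x \<notin> Tk T"
  have c: "\<exists>m\<in>T. (\<forall>s\<in>T. m \<le> s) \<and> sigma T m > m"
  proof (rule ccontr)
    assume "\<not> ?thesis"
    then have "Tk T = T" unfolding Tk_def by (intro if_not_P)
    then show False using nx x by simp
  qed
  then obtain m0 where m0: "m0 \<in> T" "\<forall>s\<in>T. m0 \<le> s" "sigma T m0 > m0" by blast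
  have TkT: "Tk T = T - {m. m \<in> T \<and> (\<forall>s\<in>T. m \<le> s)}"
    unfolding Tk_def using c by (intro if_P)
  have xmin: "\<forall>s\<in>T. x \<le> s" using nx x TkT by auto
  then have "x = m0" using m0 x by (meson antisym)
  then have sx: "sigma T x > x" using m0 by simp
  have fmin: "\<forall>s\<in>f ` T. f x \<le> s" using xmin m x by (auto simp: smo_le)
  have "sigma (f ` T) (f x) = f (sigma T x)" using sigma_img[OF T S m x] .
  also have "\<dots> > f x" using sx sigma_in[OF T x] x m by (simp add: smo_less)
  finally have "sigma (f ` T) (f x) > f x" .
  then have "\<exists>m\<in>f ` T. (\<forall>s\<in>f ` T. m \<le> s) \<and> sigma (f ` T) m > m"
    using fmin x by blast
  then have "Tk (f ` T) = f ` T - {m. m \<in> f ` T \<and> (\<forall>s\<in>f ` T. m \<le> s)}"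
    unfolding Tk_def by (intro if_P)
  then show False using fx fmin by auto
qed

lemma inv_cont:
  fixes f :: "real \<Rightarrow> real"
  assumes T: "time_scale T" and m: "strict_mono_on T f" and x: "x \<in> T" and e: "\<eta> > 0"
  shows "\<exists>\<delta>>0. \<forall>s\<in>f ` T. \<bar>s - f x\<bar> < \<delta> \<longrightarrow> \<bar>the_inv_into T f s - x\<bar> < \<eta>"
proof -
  have inj: "inj_on f T" using m strict_mono_on_imp_inj_on by blast
  have cT: "closed T" using T unfolding time_scale_def by simp
  have up: "\<exists>\<delta>>0. \<forall>y\<in>T. f y < f x + \<delta> \<longrightarrow> y < x + \<eta>"
  proof (cases "{y\<in>T. x + \<eta> \<le> y} = {}")
    case True then show ?thesis by (intro exI[of _ 1]) force
  next
    case False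
    define A where "A = {y\<in>T. x + \<eta> \<le> y}"
    have "A = T \<inter> {x+\<eta>..}" unfolding A_def by auto
    then have cA: "closed A" using closed_Int[OF cT closed_atLeast[of "x+\<eta>"]] by simp
    have bA: "bdd_below A" unfolding A_def by (auto intro: bdd_belowI[of _ "x+\<eta>"])
    have iA: "Inf A \<in> A" using closed_contains_Inf[OF _ bA cA] False A_def by auto
    then have "f x < f (Inf A)" using m x e unfolding A_def by (auto simp: smo_less)
    show ?thesis
    proof (intro exI[of _ "f (Inf A) - f x"] conjI ballI impI)
      show "0 < f (Inf A) - f x" using \<open>f x < f (Inf A)\<close> by simp
      fix y assume y: "y \<in> T" "f y < f x + (f (Inf A) - f x)"
      show "y < x + \<eta>"
      proof (rule ccontr)
        assume "\<not> y < x + \<eta>"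
        then have "y \<in> A" using y A_def by auto
        then have "Inf A \<le> y" using cInf_lower bA by blast
        then have "f (Inf A) \<le> f y" using smo_le[OF m, of "Inf A" y] iA y(1) unfolding A_def by auto
        then show False using y by simp
      qed
    qed
  qed
  have lo: "\<exists>\<delta>>0. \<forall>y\<in>T. f x - \<delta> < f y \<longrightarrow> x - \<eta> < y"
  proof (cases "{y\<in>T. y \<le> x - \<eta>} = {}")
    case True then show ?thesis by (intro exI[of _ 1]) force
  next
    case False
    define A where "A = {y\<in>T. y \<le> x - \<eta>}"
    have "A = T \<inter> {..x-\<eta>}" unfolding A_def by auto
    then have cA: "closed A" using closed_Int[OF cT closed_atMost[of "x-\<eta>"]] by simp
    have bA: "bdd_above A" unfolding A_def by (auto intro: bdd_aboveI[of _ "x-\<eta>"])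
    have iA: "Sup A \<in> A" using closed_contains_Sup[OF _ bA cA] False A_def by auto
    then have "f (Sup A) < f x" using m x e unfolding A_def by (auto simp: smo_less)
    show ?thesis
    proof (intro exI[of _ "f x - f (Sup A)"] conjI ballI impI)
      show "0 < f x - f (Sup A)" using \<open>f (Sup A) < f x\<close> by simp
      fix y assume y: "y \<in> T" "f x - (f x - f (Sup A)) < f y"
      show "x - \<eta> < y"
      proof (rule ccontr)
        assume "\<not> x - \<eta> < y"
        then have "y \<in> A" using y A_def by auto
        then have "y \<le> Sup A" using cSup_upper bA by blast
        then have "f y \<le> f (Sup A)" using smo_le[OF m, of y "Sup A"] iA y(1) unfolding A_def by auto
        then show False using y by simp
      qed
    qed
  qed
  obtain d1 where d1: "d1 > 0" "\<forall>y\<in>T. f y < f x + d1 \<longrightarrow> y < x + \<eta>" using up by blast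
  obtain d2 where d2: "d2 > 0" "\<forall>y\<in>T. f x - d2 < f y \<longrightarrow> x - \<eta> < y" using lo by blast
  show ?thesis
  proof (intro exI[of _ "min d1 d2"] conjI ballI impI)
    show "0 < min d1 d2" using d1 d2 by simp
    fix s assume s: "s \<in> f ` T" "\<bar>s - f x\<bar> < min d1 d2"
    then obtain y where y: "y \<in> T" "s = f y" by auto
    have "the_inv_into T f s = y" using y inj the_inv_into_f_f by metis
    then show "\<bar>the_inv_into T f s - x\<bar> < \<eta>" using d1 d2 y s by force
  qed
qed

lemma one_Q: "(1::real) \<in> Qset"
  unfolding Qset_def by (intro CollectI exI[of _ "1::nat"]) simp

lemma frac_pow_Q:
  assumes "\<alpha> \<in> Qset"
  shows "\<exists>q. odd q \<and> q > 0 \<and> \<alpha> = 1 / real q \<and> (\<forall>z. frac_pow \<alpha> z = root q z)"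
proof -
  obtain q where q: "odd q" "q > 0" "\<alpha> = 1 / real q" using assms unfolding Qset_def by auto
  have "(THE q. odd q \<and> q > 0 \<and> \<alpha> = 1 / real q) = q"
    by (rule the_equality) (use q in auto)
  then show ?thesis using q assms unfolding frac_pow_def by auto
qed

lemma frac_pow_1: "frac_pow 1 z = z"
proof -
  obtain q where q: "odd q" "q > 0" "(1::real) = 1 / real q" "\<forall>z. frac_pow 1 z = root q z"
    using frac_pow_Q[OF one_Q] by blast
  then have "q = 1" by (simp add: field_simps)
  then show ?thesis using q by simp
qed

theorem mainTheorem9:
  fixes T :: "real set" and f f' :: "real \<Rightarrow> real" and \<alpha> t :: real
  assumes "time_scale T"
    and "0 < \<alpha>" and "\<alpha> \<le> 1"
    and "strict_mono_on T f"
    and "time_scale (f ` T)"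
    and "\<forall>x\<in>Tk T. has_nabla_frac_deriv T 1 f x (f' x)"
    and "continuous_on (Tk T) f'"
    and "t \<in> Tk (f ` T)"
    and "f' (the_inv_into T f t) \<noteq> 0"
  shows "has_nabla_frac_deriv (f ` T) \<alpha> (the_inv_into T f) t
           (if \<alpha> \<noteq> 1 then nu (f ` T) t powr (1 - \<alpha>) / f' (the_inv_into T f t)
            else 1 / f' (the_inv_into T f t))"
proof -
  define S where "S = f ` T"
  define g where "g = the_inv_into T f"
  have inj: "inj_on f T" using assms(4) strict_mono_on_imp_inj_on by blast
  have tS: "t \<in> S" using assms(8) unfolding S_def Tk_def by (auto split: if_splits)
  define x where "x = g t"
  have xT: "x \<in> T" unfolding x_def g_def using tS S_def the_inv_into_into[OF inj] by blast
  have fx: "f x = t" unfolding x_def g_def using f_the_inv_into_f[OF inj] tS S_def by blast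
  have gf: "\<And>y. y \<in> T \<Longrightarrow> g (f y) = y" unfolding g_def using the_inv_into_f_f[OF inj] by blast
  have gS: "\<And>s. s \<in> S \<Longrightarrow> g s \<in> T \<and> f (g s) = s"
    unfolding g_def S_def using the_inv_into_into[OF inj] f_the_inv_into_f[OF inj] by blast
  have xTk: "x \<in> Tk T" using Tk_img[OF assms(1) assms(5) assms(4) xT] assms(8) fx by simp
  define c where "c = f' x"
  have c0: "c \<noteq> 0" using assms(9) unfolding c_def x_def g_def by simp
  define p where "p = rho T x"
  have pT: "p \<in> T" using rho_in[OF assms(1) xT] p_def by simp
  have px: "p \<le> x"
  proof (cases "{y\<in>T. y < x} = {}")
    case True then show ?thesis unfolding p_def rho_def by simp
  next
    case False
    have "Sup {y\<in>T. y < x} \<le> x" by (rule cSup_least[OF False]) auto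
    then show ?thesis unfolding p_def rho_def using False by simp
  qed
  have rS: "rho S t = f p" using rho_img[OF assms(1) assms(5) assms(4) xT] fx S_def p_def by simp
  have gp: "g (f p) = p" using gf pT .
  have der: "\<forall>\<epsilon>>0. \<exists>\<delta>>0. \<forall>y\<in>T. \<bar>y - x\<bar> < \<delta> \<longrightarrow> \<bar>f p - f y - c*(p-y)\<bar> \<le> \<epsilon>*\<bar>p - y\<bar>"
  proof (intro allI impI)
    fix \<epsilon>::real assume "\<epsilon>>0"
    then obtain \<delta> where "\<delta>>0" and d: "\<forall>s\<in>U_nbhd T \<delta> x. \<bar>(f (rho T x) - f s) - f' x * frac_pow 1 (rho T x - s)\<bar> \<le> \<epsilon> * (\<bar>rho T x - s\<bar> powr 1)"
      using assms(6) xTk one_Q unfolding has_nabla_frac_deriv_def by force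
    show "\<exists>\<delta>>0. \<forall>y\<in>T. \<bar>y - x\<bar> < \<delta> \<longrightarrow> \<bar>f p - f y - c*(p-y)\<bar> \<le> \<epsilon>*\<bar>p - y\<bar>"
    proof (intro exI[of _ \<delta>] conjI ballI impI)
      fix y assume y: "y \<in> T" "\<bar>y - x\<bar> < \<delta>"
      then have "y \<in> U_nbhd T \<delta> x" by (auto simp: U_nbhd_def abs_less_iff)
      then show "\<bar>f p - f y - c*(p-y)\<bar> \<le> \<epsilon>*\<bar>p - y\<bar>" using d by (simp add: frac_pow_1 p_def c_def)
    qed (rule \<open>\<delta>>0\<close>)
  qed
  have gcont: "\<forall>\<eta>>0. \<exists>\<delta>>0. \<forall>s\<in>S. \<bar>s - t\<bar> < \<delta> \<longrightarrow> \<bar>g s - x\<bar> < \<eta>"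
    using inv_cont[OF assms(1) assms(4) xT] fx unfolding S_def g_def by simp
  have Usub: "\<And>\<delta>. (if \<alpha>\<in>Qset then U_nbhd S \<delta> t else U_left S \<delta> t) \<subseteq> {s\<in>S. \<bar>s - t\<bar> < \<delta>}"
    by (auto simp: U_nbhd_def U_left_def abs_less_iff)
  define L where "L = (if \<alpha> \<noteq> 1 then (t - f p) powr (1 - \<alpha>) / c else 1 / c)"
  have key: "\<forall>\<epsilon>>0. \<exists>\<delta>>0. \<forall>s\<in>(if \<alpha>\<in>Qset then U_nbhd S \<delta> t else U_left S \<delta> t).
        \<bar>(p - g s) - L * frac_pow \<alpha> (f p - s)\<bar> \<le> \<epsilon> * (\<bar>f p - s\<bar> powr \<alpha>)"
  proof (cases "p < x")
    case True
    have Ane: "{y\<in>T. y < x} \<noteq> {}" using pT True by auto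
    have pSup: "p = Sup {y\<in>T. y < x}" unfolding p_def rho_def using Ane by (intro if_not_P)
    have gapT: "\<forall>y\<in>T. y < x \<longrightarrow> y \<le> p"
      using pSup cSup_upper[of _ "{y\<in>T. y < x}"] bdd_aboveI[of "{y\<in>T. y < x}" x] by auto
    have gap: "\<forall>s\<in>S. s < t \<longrightarrow> s \<le> f p"
    proof (intro ballI impI)
      fix s assume s: "s \<in> S" "s < t"
      then obtain y where y: "y \<in> T" "s = f y" unfolding S_def by auto
      then have "y < x" using s fx xT smo_less[OF assms(4)] by auto
      then have "y \<le> p" using gapT y by auto
      then show "s \<le> f p" using y pT smo_le[OF assms(4)] by auto
    qed
    have fpt: "f p < t" using smo_less[OF assms(4) pT xT] True fx by simp
    have cx: "f p - f x = c*(p-x)"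
    proof (rule ccontr)
      assume ne: "f p - f x \<noteq> c*(p-x)"
      define a where "a = \<bar>f p - f x - c*(p-x)\<bar>"
      define b where "b = \<bar>p - x\<bar>"
      have a0: "a > 0" using ne a_def by simp
      have b0: "b > 0" using True b_def by simp
      obtain \<delta> where "\<delta> > 0" and d: "\<forall>y\<in>T. \<bar>y - x\<bar> < \<delta> \<longrightarrow> \<bar>f p - f y - c*(p-y)\<bar> \<le> (a/(2*b))*\<bar>p - y\<bar>"
        using der[rule_format, of "a/(2*b)"] a0 b0 by auto
      then have "a \<le> (a/(2*b))*b" using xT a_def b_def by auto
      also have "\<dots> = a/2" using b0 by simp
      finally show False using a0 by simp
    qed
    define \<nu> where "\<nu> = t - f p"
    have nu0: "\<nu> > 0" using fpt \<nu>_def by simp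
    have cnu: "c * (x - p) = \<nu>" using cx fx \<nu>_def by (simp add: algebra_simps)
    show ?thesis
    proof (cases "\<alpha> \<in> Qset")
      case False
      show ?thesis
      proof (intro allI impI exI[of _ \<nu>] conjI ballI)
        fix \<epsilon>::real and s assume s: "s \<in> (if \<alpha> \<in> Qset then U_nbhd S \<nu> t else U_left S \<nu> t)"
        then have "s \<in> S" "f p < s" "s < t" using False \<nu>_def by (auto simp: U_left_def)
        then have False using gap by force
        then show "\<bar>(p - g s) - L * frac_pow \<alpha> (f p - s)\<bar> \<le> \<epsilon> * (\<bar>f p - s\<bar> powr \<alpha>)" by simp
      qed (rule nu0)
    next
      case Qa: True
      obtain q where q: "odd q" "q > 0" "\<alpha> = 1 / real q" "\<forall>z. frac_pow \<alpha> z = root q z"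
        using frac_pow_Q[OF Qa] by blast
      have Lnu: "L = \<nu> powr (1 - \<alpha>) / c" using nu0 unfolding L_def \<nu>_def by auto
      have rt: "root q (f p - t) = - (\<nu> powr \<alpha>)"
        using real_root_minus[of q "\<nu>"] root_powr_inverse[of q \<nu>] q nu0 \<nu>_def by simp
      have "L * root q (f p - t) = - ((\<nu> powr (1 - \<alpha>) * \<nu> powr \<alpha>) / c)" using rt Lnu by simp
      also have "\<nu> powr (1 - \<alpha>) * \<nu> powr \<alpha> = \<nu>" using powr_add[of \<nu> "1 - \<alpha>" \<alpha>] nu0 by simp
      also have "- (\<nu> / c) = p - x" using cnu c0 by (auto simp: field_simps)
      finally have Lt: "L * root q (f p - t) = p - x" .
      show ?thesis
      proof (intro allI impI)
        fix \<epsilon>::real assume e: "\<epsilon> > 0"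
        define \<eta> where "\<eta> = \<epsilon> * \<nu> powr \<alpha> / 2"
        have eta0: "\<eta> > 0" unfolding \<eta>_def using e nu0 by simp
        obtain d1 where d1: "d1 > 0" "\<forall>s\<in>S. \<bar>s - t\<bar> < d1 \<longrightarrow> \<bar>g s - x\<bar> < \<eta>" using gcont[rule_format, OF eta0] by auto
        have "continuous (at (f p - t)) (root q)" using isCont_real_root by blast
        then have cr: "\<forall>e>0. \<exists>d>0. \<forall>z. dist z (f p - t) < d \<longrightarrow> dist (root q z) (root q (f p - t)) < e"
          unfolding continuous_at_eps_delta .
        have ep: "\<eta> / (\<bar>L\<bar> + 1) > 0" using eta0 by (simp add: add_nonneg_pos)
        obtain d2 where d2: "d2 > 0" "\<forall>z. dist z (f p - t) < d2 \<longrightarrow> dist (root q z) (root q (f p - t)) < \<eta> / (\<bar>L\<bar> + 1)"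
          using cr[rule_format, OF ep] by auto
        show "\<exists>\<delta>>0. \<forall>s\<in>(if \<alpha>\<in>Qset then U_nbhd S \<delta> t else U_left S \<delta> t).
            \<bar>(p - g s) - L * frac_pow \<alpha> (f p - s)\<bar> \<le> \<epsilon> * (\<bar>f p - s\<bar> powr \<alpha>)"
        proof (intro exI[of _ "min \<nu> (min d1 d2)"] conjI ballI)
          show "min \<nu> (min d1 d2) > 0" using nu0 d1 d2 by simp
          fix s assume "s \<in> (if \<alpha>\<in>Qset then U_nbhd S (min \<nu> (min d1 d2)) t else U_left S (min \<nu> (min d1 d2)) t)"
          then have s: "s \<in> S" "\<bar>s - t\<bar> < min \<nu> (min d1 d2)" using Usub by blast+
          have st: "t \<le> s"
          proof (rule ccontr)
            assume "\<not> t \<le> s"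
            then have "s \<le> f p" using gap s by auto
            then show False using s \<nu>_def by auto
          qed
          have nule: "\<nu> powr \<alpha> \<le> \<bar>f p - s\<bar> powr \<alpha>"
            by (rule powr_mono2) (use nu0 st \<nu>_def assms(2) in auto)
          have g1: "\<bar>g s - x\<bar> < \<eta>" using d1 s by auto
          have r1: "\<bar>root q (f p - s) - root q (f p - t)\<bar> < \<eta> / (\<bar>L\<bar> + 1)"
            using d2 s by (auto simp: dist_real_def)
          have "\<bar>L\<bar> * \<bar>root q (f p - s) - root q (f p - t)\<bar> \<le> \<bar>L\<bar> * (\<eta> / (\<bar>L\<bar> + 1))"
            using r1 by (intro mult_left_mono) auto
          also have "\<dots> \<le> \<eta>" using eta0 by (simp add: field_simps)
          finally have r2: "\<bar>L * (root q (f p - s) - root q (f p - t))\<bar> \<le> \<eta>" by (simp add: abs_mult)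
          have "(p - g s) - L * frac_pow \<alpha> (f p - s) = (x - g s) - L * (root q (f p - s) - root q (f p - t))"
            using Lt q(4) by (simp add: algebra_simps)
          then have "\<bar>(p - g s) - L * frac_pow \<alpha> (f p - s)\<bar> < 2 * \<eta>" using g1 r2 by linarith
          also have "2 * \<eta> = \<epsilon> * \<nu> powr \<alpha>" using \<eta>_def by simp
          also have "\<dots> \<le> \<epsilon> * (\<bar>f p - s\<bar> powr \<alpha>)" using nule e by simp
          finally show "\<bar>(p - g s) - L * frac_pow \<alpha> (f p - s)\<bar> \<le> \<epsilon> * (\<bar>f p - s\<bar> powr \<alpha>)" by simp
        qed
      qed
    qed
  next
    case False
    then have pxe: "p = x" using px by simp
    have fpt: "f p = t" using pxe fx by simp
    have key0: "\<forall>\<epsilon>'>0. \<exists>\<delta>>0. \<forall>s\<in>S. \<bar>s - t\<bar> < \<delta> \<longrightarrow> \<bar>(t - s) - c*(x - g s)\<bar> \<le> \<epsilon>' * \<bar>x - g s\<bar>"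
    proof (intro allI impI)
      fix \<epsilon>'::real assume "\<epsilon>' > 0"
      then obtain d' where d': "d' > 0" "\<forall>y\<in>T. \<bar>y - x\<bar> < d' \<longrightarrow> \<bar>f p - f y - c*(p-y)\<bar> \<le> \<epsilon>'*\<bar>p - y\<bar>"
        using der[rule_format, OF \<open>\<epsilon>' > 0\<close>] by auto
      obtain d where d: "d > 0" "\<forall>s\<in>S. \<bar>s - t\<bar> < d \<longrightarrow> \<bar>g s - x\<bar> < d'" using gcont[rule_format, OF d'(1)] by auto
      show "\<exists>\<delta>>0. \<forall>s\<in>S. \<bar>s - t\<bar> < \<delta> \<longrightarrow> \<bar>(t - s) - c*(x - g s)\<bar> \<le> \<epsilon>' * \<bar>x - g s\<bar>"
      proof (intro exI[of _ d] conjI ballI impI)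
        fix s assume s: "s \<in> S" "\<bar>s - t\<bar> < d"
        then have "\<bar>g s - x\<bar> < d'" using d by auto
        then show "\<bar>(t - s) - c*(x - g s)\<bar> \<le> \<epsilon>' * \<bar>x - g s\<bar>"
          using d'(2) gS[OF s(1)] pxe fpt by force
      qed (rule d(1))
    qed
    have bound: "\<exists>\<delta>>0. \<forall>s\<in>S. \<bar>s - t\<bar> < \<delta> \<longrightarrow> \<bar>x - g s\<bar> \<le> 2 / \<bar>c\<bar> * \<bar>t - s\<bar>"
    proof -
      obtain d where d: "d > 0" "\<forall>s\<in>S. \<bar>s - t\<bar> < d \<longrightarrow> \<bar>(t - s) - c*(x - g s)\<bar> \<le> (\<bar>c\<bar>/2) * \<bar>x - g s\<bar>"
        using key0[rule_format, of "\<bar>c\<bar>/2"] c0 by auto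
      show ?thesis
      proof (intro exI[of _ d] conjI ballI impI)
        fix s assume s: "s \<in> S" "\<bar>s - t\<bar> < d"
        then have h: "\<bar>(t - s) - c*(x - g s)\<bar> \<le> (\<bar>c\<bar>/2) * \<bar>x - g s\<bar>" using d by auto
        have "\<bar>c*(x - g s)\<bar> = \<bar>c\<bar> * \<bar>x - g s\<bar>" by (simp add: abs_mult)
        then have "\<bar>c\<bar> * \<bar>x - g s\<bar> \<le> \<bar>t - s\<bar> + (\<bar>c\<bar>/2) * \<bar>x - g s\<bar>" using h by linarith
        moreover have "\<bar>c\<bar>/2 * \<bar>x - g s\<bar> = (\<bar>c\<bar> * \<bar>x - g s\<bar>)/2" by simp
        ultimately have "\<bar>c\<bar> * \<bar>x - g s\<bar> \<le> 2 * \<bar>t - s\<bar>" by linarith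
        then show "\<bar>x - g s\<bar> \<le> 2 / \<bar>c\<bar> * \<bar>t - s\<bar>" using c0 by (simp add: field_simps)
      qed (rule d(1))
    qed
    then obtain db where db: "db > 0" "\<forall>s\<in>S. \<bar>s - t\<bar> < db \<longrightarrow> \<bar>x - g s\<bar> \<le> 2 / \<bar>c\<bar> * \<bar>t - s\<bar>" by blast
    show ?thesis
    proof (cases "\<alpha> = 1")
      case True
      have L1: "L = 1 / c" using True L_def by simp
      show ?thesis
      proof (intro allI impI)
        fix \<epsilon>::real assume e: "\<epsilon> > 0"
        have e': "\<epsilon> * c^2 / 2 > 0" using e c0 by simp
        obtain da where da: "da > 0" "\<forall>s\<in>S. \<bar>s - t\<bar> < da \<longrightarrow> \<bar>(t - s) - c*(x - g s)\<bar> \<le> (\<epsilon> * c^2 / 2) * \<bar>x - g s\<bar>"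
          using key0[rule_format, OF e'] by auto
        show "\<exists>\<delta>>0. \<forall>s\<in>(if \<alpha>\<in>Qset then U_nbhd S \<delta> t else U_left S \<delta> t).
            \<bar>(p - g s) - L * frac_pow \<alpha> (f p - s)\<bar> \<le> \<epsilon> * (\<bar>f p - s\<bar> powr \<alpha>)"
        proof (intro exI[of _ "min da db"] conjI ballI)
          show "min da db > 0" using da db by simp
          fix s assume "s \<in> (if \<alpha>\<in>Qset then U_nbhd S (min da db) t else U_left S (min da db) t)"
          then have s: "s \<in> S" "\<bar>s - t\<bar> < min da db" using Usub by blast+
          have h1: "\<bar>(t - s) - c*(x - g s)\<bar> \<le> (\<epsilon> * c^2 / 2) * \<bar>x - g s\<bar>" using da s by auto
          have h2: "\<bar>x - g s\<bar> \<le> 2 / \<bar>c\<bar> * \<bar>t - s\<bar>" using db s by auto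
          have "(p - g s) - L * frac_pow \<alpha> (f p - s) = - ((t - s) - c*(x - g s)) / c"
            using True pxe fpt c0 unfolding L1 by (simp add: frac_pow_1 field_simps)
          then have "\<bar>(p - g s) - L * frac_pow \<alpha> (f p - s)\<bar> = \<bar>(t - s) - c*(x - g s)\<bar> / \<bar>c\<bar>"
            by (simp only: abs_divide abs_minus_cancel)
          also have "\<dots> \<le> ((\<epsilon> * c^2 / 2) * \<bar>x - g s\<bar>) / \<bar>c\<bar>"
            using h1 by (rule divide_right_mono) simp
          also have "\<dots> \<le> ((\<epsilon> * c^2 / 2) * (2 / \<bar>c\<bar> * \<bar>t - s\<bar>)) / \<bar>c\<bar>"
            using h2 e' by (intro divide_right_mono mult_left_mono) auto
          also have "\<dots> = \<epsilon> * \<bar>t - s\<bar>" using c0 by (simp add: field_simps power2_eq_square)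
          also have "\<dots> = \<epsilon> * (\<bar>f p - s\<bar> powr \<alpha>)" using True fpt by simp
          finally show "\<bar>(p - g s) - L * frac_pow \<alpha> (f p - s)\<bar> \<le> \<epsilon> * (\<bar>f p - s\<bar> powr \<alpha>)" .
        qed
      qed
    next
      case False
      have L0: "L = 0" using False L_def fpt by simp
      have a1: "0 < 1 - \<alpha>" using False assms(3) by simp
      show ?thesis
      proof (intro allI impI)
        fix \<epsilon>::real assume e: "\<epsilon> > 0"
        define k where "k = \<epsilon> * \<bar>c\<bar> / 2"
        have k0: "k > 0" unfolding k_def using e c0 by simp
        define d3 where "d3 = k powr (1 / (1 - \<alpha>))"
        have d30: "d3 > 0" using k0 d3_def by simp
        have d3k: "d3 powr (1 - \<alpha>) = k" using k0 a1 unfolding d3_def powr_powr by simp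
        show "\<exists>\<delta>>0. \<forall>s\<in>(if \<alpha>\<in>Qset then U_nbhd S \<delta> t else U_left S \<delta> t).
            \<bar>(p - g s) - L * frac_pow \<alpha> (f p - s)\<bar> \<le> \<epsilon> * (\<bar>f p - s\<bar> powr \<alpha>)"
        proof (intro exI[of _ "min d3 db"] conjI ballI)
          show "min d3 db > 0" using d30 db by simp
          fix s assume "s \<in> (if \<alpha>\<in>Qset then U_nbhd S (min d3 db) t else U_left S (min d3 db) t)"
          then have s: "s \<in> S" "\<bar>s - t\<bar> < min d3 db" using Usub by blast+
          show "\<bar>(p - g s) - L * frac_pow \<alpha> (f p - s)\<bar> \<le> \<epsilon> * (\<bar>f p - s\<bar> powr \<alpha>)"
          proof (cases "s = t")
            case True
            then show ?thesis using pxe L0 e by (simp add: x_def)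
          next
            case False
            define d where "d = \<bar>t - s\<bar>"
            have d0: "d > 0" using False d_def by simp
            have "d < d3" using s d_def by (simp add: abs_minus_commute)
            then have dk: "d powr (1 - \<alpha>) < k" using d3k powr_less_mono2[OF a1, of d d3] d0 by simp
            have dd: "d = d powr \<alpha> * d powr (1 - \<alpha>)" using powr_add[of d \<alpha> "1 - \<alpha>"] d0 by simp
            have h2: "\<bar>x - g s\<bar> \<le> 2 / \<bar>c\<bar> * d" using db s d_def by auto
            also have "\<dots> = 2 / \<bar>c\<bar> * (d powr \<alpha> * d powr (1 - \<alpha>))" using dd by simp
            also have "\<dots> \<le> 2 / \<bar>c\<bar> * (d powr \<alpha> * k)"
              using dk d0 c0 by (intro mult_left_mono) auto
            also have "\<dots> = \<epsilon> * d powr \<alpha>" using c0 k_def by (simp add: field_simps)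
            finally show ?thesis using L0 pxe fpt d_def by (simp add: abs_minus_commute)
          qed
        qed
      qed
    qed
  qed
  have nuS: "nu (f ` T) t = t - f p" using rS unfolding nu_def S_def by simp
  have fc: "f' (the_inv_into T f t) = c" by (simp add: c_def x_def g_def)
  have Leq: "(if \<alpha> \<noteq> 1 then nu (f ` T) t powr (1 - \<alpha>) / f' (the_inv_into T f t)
            else 1 / f' (the_inv_into T f t)) = L" unfolding nuS fc L_def ..
  have tTk: "t \<in> Tk S" using assms(8) S_def by simp
  have "has_nabla_frac_deriv S \<alpha> g t L" unfolding has_nabla_frac_deriv_def rS gp
    using tTk key by (rule conjI)
  then show ?thesis unfolding Leq by (simp add: S_def g_def)
qed

end
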